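(* Fix integers $k_1,k_2$ with $-1\le k_1\le k_2$ and $g\ge 4k_1+3$. Suppose $\overline{x}=(x_1,\ldots,x_{2k_1+1})\in\{1,2,3\}^{2k_1+1}$ satisfies: (1) whenever $i_1,i_2,i_3\in[1,2k_1+1]$ satisfy $i_1+i_2=i_3$, we have $(x_{i_1},x_{i_2},x_{i_3})\ne(1,1,3)$; (2) $a(\overline{x})+b(\overline{x})-c(\overline{x})=2k_1+1-k_2$; (3) $a(\overline{x})+2b(\overline{x})\le k_1+1$. Then the number of numerical semigroups $S$ with $g(S)=g$, $m(S)=g-k_1$, $e(S)=g-k_2$, and whose Kunz coordinate vector with respect to $m=m(S)$ has first $2k_1+1$ coordinates equal to $\overline{x}$, is \[\binom{g-3k_1-2}{k_1+1-a(\overline{x})-2b(\overline{x})}.\]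
   Context: A numerical semigroup $S$ is a submonoid of $\mathbb{N}_0$ with finite complement; $g(S)$ is the size of the complement, $m(S)$ the smallest nonzero element, $e(S)$ the size of the minimal generating set $(S\setminus\{0\})\setminus((S\setminus\{0\})+(S\setminus\{0\}))$. For $m=m(S)$, the Apéry set $\{s\in S: s-m\notin S\}$ contains exactly one element $a_i$ in each residue class $i$ mod $m$; writing $a_i=k_im+i$ for $1\le i\le m-1$, the Kunz coordinate vector of $S$ with respect to $m$ is $(k_1,\ldots,k_{m-1})$. For $\overline{x}=(x_1,\ldots,x_t)\in\{1,2,3\}^t$: $a(\overline{x})=\#\{i: x_i=2\}$, $b(\overline{x})=\#\{i: x_i=3\}$, $c(\overline{x})=\#\{i\in[1,t]: \exists j_1,j_2\in[1,t],\ j_1+j_2=i,\ (x_{j_1},x_{j_2},x_i)=(1,1,2)\}$. *)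

theory Defs
  imports Main
begin

definition numerical_semigroup :: "nat set \<Rightarrow> bool" where
  "numerical_semigroup S \<longleftrightarrow> 0 \<in> S \<and> (\<forall>x\<in>S. \<forall>y\<in>S. x + y \<in> S) \<and> finite (UNIV - S)"

definition genus :: "nat set \<Rightarrow> nat" where
  "genus S = card (UNIV - S)"

definition multiplicity :: "nat set \<Rightarrow> nat" where
  "multiplicity S = (LEAST s. s \<in> S \<and> s \<noteq> 0)"

definition embedding_dimension :: "nat set \<Rightarrow> nat" where
  "embedding_dimension S =
     card ((S - {0}) - {u + v | u v. u \<in> S - {0} \<and> v \<in> S - {0}})"

(* Apery set {s in S. s - m not in S} (s - m taken in the integers). *)
definition apery :: "nat set \<Rightarrow> nat \<Rightarrow> nat set" where
  "apery S m = {s \<in> S. \<not> (m \<le> s \<and> s - m \<in> S)}"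

(* i-th Kunz coordinate w.r.t. m = m(S): a_i = k_i m + i, a_i the Apery element
   in residue class i. *)
definition kunz :: "nat set \<Rightarrow> nat \<Rightarrow> nat" where
  "kunz S i = (let m = multiplicity S;
                   a = (THE a. a \<in> apery S m \<and> a mod m = i)
               in (a - i) div m)"

(* statistics of a vector x_1..x_t, represented by a function on {1..t} *)
definition cnt_a :: "nat \<Rightarrow> (nat \<Rightarrow> nat) \<Rightarrow> nat" where
  "cnt_a t x = card {i \<in> {1..t}. x i = 2}"

definition cnt_b :: "nat \<Rightarrow> (nat \<Rightarrow> nat) \<Rightarrow> nat" where
  "cnt_b t x = card {i \<in> {1..t}. x i = 3}"

definition cnt_c :: "nat \<Rightarrow> (nat \<Rightarrow> nat) \<Rightarrow> nat" where
  "cnt_c t x = card {i \<in> {1..t}. \<exists>j1\<in>{1..t}. \<exists>j2\<in>{1..t}.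
                       j1 + j2 = i \<and> x j1 = 1 \<and> x j2 = 1 \<and> x i = 2}"

end

theory Submission
  imports Defs
begin

definition sg :: "nat \<Rightarrow> (nat \<Rightarrow> nat) \<Rightarrow> nat set" where
  "sg m K = {n. K (n mod m) \<le> n div m}"

definition kunz_ok :: "nat \<Rightarrow> (nat \<Rightarrow> nat) \<Rightarrow> bool" where
  "kunz_ok m K \<longleftrightarrow> 1 \<le> m \<and> K 0 = 0 \<and> (\<forall>i\<in>{1..<m}. 1 \<le> K i) \<and>
     (\<forall>i<m. \<forall>j<m. K ((i+j) mod m) \<le> K i + K j + (if m \<le> i + j then 1 else 0))"

definition dec :: "nat \<Rightarrow> (nat \<Rightarrow> nat) \<Rightarrow> nat \<Rightarrow> bool" where
  "dec m K i \<longleftrightarrow> (\<exists>j\<in>{1..<m}. \<exists>l\<in>{1..<m}.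
      (j + l = i \<and> K j + K l = K i) \<or> (j + l = i + m \<and> K j + K l + 1 = K i))"

lemma sg_cong: "(\<And>i. i < m \<Longrightarrow> K i = K' i) \<Longrightarrow> 1 \<le> m \<Longrightarrow> sg m K = sg m K'"
  unfolding sg_def by auto

lemma mem_sg: "n \<in> sg m K \<longleftrightarrow> K (n mod m) \<le> n div m"
  by (simp add: sg_def)

lemma apery_elt_in: "i < m \<Longrightarrow> K i * m + i \<in> sg m K"
  by (simp add: sg_def)

lemma sg_add:
  assumes "kunz_ok m K" "u \<in> sg m K" "v \<in> sg m K" shows "u + v \<in> sg m K"
proof -
  have m: "1 \<le> m" using assms(1) kunz_ok_def by blast
  define i where "i = u mod m"
  define j where "j = v mod m"
  have im: "i < m" "j < m" using m by (auto simp: i_def j_def)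
  have "u + v = (u div m + v div m) * m + (i + j)" by (simp add: i_def j_def algebra_simps)
  then have d: "(u+v) div m = u div m + v div m + (i+j) div m" and md: "(u+v) mod m = (i+j) mod m"
    using m by simp_all
  have "(i+j) div m = (if m \<le> i + j then 1 else 0)"
  proof (cases "m \<le> i + j")
    case True
    then show ?thesis using im m by (simp add: le_div_geq)
  qed (simp)
  moreover have "K ((i+j) mod m) \<le> K i + K j + (if m \<le> i + j then 1 else 0)"
    using assms(1) im unfolding kunz_ok_def by blast
  moreover have "K i \<le> u div m" "K j \<le> v div m" using assms(2,3) by (auto simp: sg_def i_def j_def)
  ultimately show ?thesis unfolding mem_sg md d by linarith
qed

lemma kunz_okD:
  assumes "kunz_ok m K"
  shows "1 \<le> m" "K 0 = 0" "\<And>i. 0 < i \<Longrightarrow> i < m \<Longrightarrow> 1 \<le> K i"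
    "\<And>i j. i < m \<Longrightarrow> j < m \<Longrightarrow> K ((i+j) mod m) \<le> K i + K j + (if m \<le> i + j then 1 else 0)"
  using assms unfolding kunz_ok_def by auto

lemma compl_sg:
  assumes "1 \<le> m"
  shows "UNIV - sg m K = (\<lambda>(i,q). q * m + i) ` (SIGMA i:{..<m}. {..<K i})"
proof (rule set_eqI, rule iffI)
  fix n assume "n \<in> UNIV - sg m K"
  then have "n div m < K (n mod m)" by (auto simp: sg_def)
  moreover have "n = (n div m) * m + n mod m" by simp
  moreover have "n mod m < m" using assms by simp
  ultimately show "n \<in> (\<lambda>(i,q). q * m + i) ` (SIGMA i:{..<m}. {..<K i})"
    by (intro image_eqI[of _ _ "(n mod m, n div m)"]) auto
next
  fix n assume "n \<in> (\<lambda>(i,q). q * m + i) ` (SIGMA i:{..<m}. {..<K i})"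
  then obtain i q where "i < m" "q < K i" "n = q * m + i" by auto
  then show "n \<in> UNIV - sg m K" by (simp add: sg_def)
qed

lemma inj_qm: "1 \<le> (m::nat) \<Longrightarrow> inj_on (\<lambda>(i,q). q * m + i) (SIGMA i:{..<m}. {..<(K::nat\<Rightarrow>nat) i})"
proof (rule inj_onI, clarify)
  fix i q i' q' assume "1 \<le> m" "i < m" "i' < m" "q * m + i = q' * m + i'"
  then have "(q * m + i) mod m = (q' * m + i') mod m" "(q * m + i) div m = (q' * m + i') div m" by auto
  then show "i = i' \<and> q = q'" using \<open>i < m\<close> \<open>i' < m\<close> by simp
qed

lemma genus_sg:
  assumes "1 \<le> m" shows "genus (sg m K) = (\<Sum>i<m. K i)" "finite (UNIV - sg m K)"
proof -
  have "card (UNIV - sg m K) = card (SIGMA i:{..<m}. {..<K i})"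
    unfolding compl_sg[OF assms] by (rule card_image[OF inj_qm[OF assms]])
  also have "\<dots> = (\<Sum>i<m. K i)" by simp
  finally show "genus (sg m K) = (\<Sum>i<m. K i)" by (simp add: genus_def)
  show "finite (UNIV - sg m K)" unfolding compl_sg[OF assms] by auto
qed

lemma ns_sg: assumes "kunz_ok m K" shows "numerical_semigroup (sg m K)"
  unfolding numerical_semigroup_def
  using genus_sg(2)[OF kunz_okD(1)[OF assms]] sg_add[OF assms] kunz_okD(2)[OF assms]
  by (auto simp: sg_def)

lemma sg_pos_ge:
  assumes "kunz_ok m K" "u \<in> sg m K" "u \<noteq> 0" shows "m \<le> u"
proof (rule ccontr)
  assume "\<not> m \<le> u"
  then have "u div m = 0" "u mod m = u" by auto
  with assms kunz_okD(3)[OF assms(1), of u] \<open>\<not> m \<le> u\<close> show False by (auto simp: sg_def)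
qed

lemma mult_sg: assumes "kunz_ok m K" shows "multiplicity (sg m K) = m"
  unfolding multiplicity_def
proof (rule Least_equality)
  show "m \<in> sg m K \<and> m \<noteq> 0" using kunz_okD(1,2)[OF assms] by (simp add: sg_def)
  show "\<And>y. y \<in> sg m K \<and> y \<noteq> 0 \<Longrightarrow> m \<le> y" using sg_pos_ge[OF assms] by blast
qed

lemma kunz_sg: assumes "kunz_ok m K" "i < m" shows "kunz (sg m K) i = K i"
proof -
  have m: "1 \<le> m" using kunz_okD(1)[OF assms(1)] .
  have "(THE a. a \<in> apery (sg m K) m \<and> a mod m = i) = K i * m + i"
  proof (rule the_equality)
    show "K i * m + i \<in> apery (sg m K) m \<and> (K i * m + i) mod m = i"
    proof -
      have "\<not> (m \<le> K i * m + i \<and> K i * m + i - m \<in> sg m K)"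
      proof
        assume h: "m \<le> K i * m + i \<and> K i * m + i - m \<in> sg m K"
        then have "1 \<le> K i" using assms(2) by (cases "K i") auto
        then have "K i * m + i - m = (K i - 1) * m + i" by (simp add: diff_mult_distrib)
        with h assms(2) \<open>1 \<le> K i\<close> show False by (simp add: sg_def) linarith
      qed
      then show ?thesis using assms(2) by (simp add: apery_def sg_def)
    qed
    fix a assume a: "a \<in> apery (sg m K) m \<and> a mod m = i"
    then have ak: "K i \<le> a div m" by (auto simp: apery_def sg_def)
    have "a div m = K i"
    proof (rule ccontr)
      assume "a div m \<noteq> K i"
      then have "1 \<le> a div m" using ak by linarith
      have aq: "a = a div m * m + i" using a by (metis div_mult_mod_eq)
      have e: "(a div m - 1) * m + i + m = a div m * m + i" using \<open>1 \<le> a div m\<close> by (cases "a div m") auto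
      then have "m \<le> a" using aq by linarith
      have "a - m = (a div m - 1) * m + i" using e aq by linarith
      then have "a - m \<in> sg m K" using ak \<open>a div m \<noteq> K i\<close> assms(2) by (simp add: sg_def)
      with a \<open>m \<le> a\<close> show False by (simp add: apery_def)
    qed
    then show "a = K i * m + i" using a by (metis div_mult_mod_eq)
  qed
  then show ?thesis unfolding kunz_def Let_def mult_sg[OF assms(1)] using m by simp
qed

lemma div_sum_lt: "i < (m::nat) \<Longrightarrow> j < m \<Longrightarrow> (i+j) div m = (if m \<le> i + j then 1 else 0)"
  by (simp add: le_div_geq)

lemma closed_ineq:
  assumes m: "1 \<le> m" and cl: "\<And>u v. u \<in> sg m K \<Longrightarrow> v \<in> sg m K \<Longrightarrow> u + v \<in> sg m K"
    and ij: "i < m" "j < m"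
  shows "K ((i+j) mod m) \<le> K i + K j + (if m \<le> i + j then 1 else 0)"
proof -
  have "K i * m + i + (K j * m + j) \<in> sg m K" using cl apery_elt_in ij by blast
  moreover have "K i * m + i + (K j * m + j) = (K i + K j) * m + (i + j)" by (simp add: algebra_simps)
  ultimately have "K ((i+j) mod m) \<le> K i + K j + (i+j) div m" using m by (simp add: sg_def)
  then show ?thesis using div_sum_lt[OF ij] by simp
qed

lemma ns_structure:
  assumes ns: "numerical_semigroup S" and mdef: "m = multiplicity S"
  shows "kunz_ok m (kunz S) \<and> S = sg m (kunz S)"
proof -
  have z: "0 \<in> S" and cl: "\<And>x y. x \<in> S \<Longrightarrow> y \<in> S \<Longrightarrow> x + y \<in> S" and fin: "finite (UNIV - S)"
    using ns unfolding numerical_semigroup_def by auto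
  obtain B where B: "\<forall>n\<in>UNIV - S. n < B" using fin finite_nat_set_iff_bounded by blast
  have big: "\<And>n. B \<le> n \<Longrightarrow> n \<in> S" using B by (meson DiffI UNIV_I leD)
  have mS: "m \<in> S \<and> m \<noteq> 0" unfolding mdef multiplicity_def
    by (rule LeastI[of _ "B+1"]) (simp add: big)
  have mle: "\<And>s. s \<in> S \<Longrightarrow> s \<noteq> 0 \<Longrightarrow> m \<le> s" unfolding mdef multiplicity_def
    by (simp add: Least_le)
  have m1: "1 \<le> m" using mS by simp
  have addm: "\<And>s q. s \<in> S \<Longrightarrow> s + q * m \<in> S"
  proof -
    fix s q assume "s \<in> S" then show "s + q * m \<in> S"
    proof (induction q)
      case (Suc q)
      then have "(s + q * m) + m \<in> S" using cl mS by blast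
      then show ?case by (simp add: algebra_simps)
    qed simp
  qed
  define w where "w i = (LEAST n. n \<in> S \<and> n mod m = i)" for i
  have wS: "w i \<in> S \<and> w i mod m = i" if "i < m" for i
  proof -
    have "B \<le> B * m" using m1 by simp
    then have "B \<le> B * m + i" by linarith
    then have "B * m + i \<in> S \<and> (B * m + i) mod m = i" using that m1 big by simp
    then show ?thesis unfolding w_def by (rule LeastI)
  qed
  have wle: "w (n mod m) \<le> n" if "n \<in> S" for n
    unfolding w_def using that by (simp add: Least_le)
  define K where "K = kunz S"
  have theq: "(THE a. a \<in> apery S m \<and> a mod m = i) = w i" if i: "i < m" for i
  proof (rule the_equality)
    show "w i \<in> apery S m \<and> w i mod m = i"
    proof -
      have "\<not> (m \<le> w i \<and> w i - m \<in> S)"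
      proof
        assume h: "m \<le> w i \<and> w i - m \<in> S"
        then have "(w i - m) mod m = i" using wS[OF i] by (metis le_mod_geq)
        then have "w i \<le> w i - m" using wle[of "w i - m"] h by simp
        then show False using h m1 by linarith
      qed
      then show ?thesis using wS[OF i] by (simp add: apery_def)
    qed
    fix a assume a: "a \<in> apery S m \<and> a mod m = i"
    then have aS: "a \<in> S" and nm: "\<not> (m \<le> a \<and> a - m \<in> S)" by (auto simp: apery_def)
    have "w i \<le> a" using wle[OF aS] a by simp
    moreover have "a mod m = w i mod m" using a wS[OF i] by simp
    ultimately have "m dvd a - w i" by (simp add: mod_eq_dvd_iff_nat)
    then obtain d where d: "a - w i = m * d" by blast
    show "a = w i"
    proof (cases d)
      case 0 then show ?thesis using d \<open>w i \<le> a\<close> by simp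
    next
      case (Suc d')
      then have "a - m = w i + d' * m" using d \<open>w i \<le> a\<close> by (simp add: algebra_simps)
      moreover have "m \<le> a" using d Suc \<open>w i \<le> a\<close> by (simp add: algebra_simps)
      moreover have "w i + d' * m \<in> S" using addm wS[OF i] by blast
      ultimately show ?thesis using nm by simp
    qed
  qed
  have Kw: "K i * m + i = w i" if i: "i < m" for i
  proof -
    have "K i = (w i - i) div m" unfolding K_def kunz_def Let_def mdef[symmetric] theq[OF i] ..
    moreover have "w i = w i div m * m + i" using wS[OF i] by (metis div_mult_mod_eq)
    moreover have "w i - i = w i div m * m" using calculation(2) by linarith
    ultimately have "K i = w i div m" using m1 by simp
    then show ?thesis using \<open>w i = w i div m * m + i\<close> by simp
  qed
  have Seq: "S = sg m K"
  proof (rule set_eqI, rule iffI)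
    fix n assume "n \<in> S"
    then have "K (n mod m) * m + n mod m \<le> n" using wle Kw m1 by simp
    then have "K (n mod m) * m \<le> n div m * m" using div_mult_mod_eq[of n m] by linarith
    then show "n \<in> sg m K" using m1 by (simp add: sg_def)
  next
    fix n assume "n \<in> sg m K"
    then have le: "K (n mod m) \<le> n div m" by (simp add: sg_def)
    have nm: "n mod m < m" using m1 by simp
    have a1: "(n div m - K (n mod m)) * m = n div m * m - K (n mod m) * m" by (simp add: diff_mult_distrib)
    have a2: "K (n mod m) * m \<le> n div m * m" using le by simp
    have a3: "n = n div m * m + n mod m" by simp
    have "n = w (n mod m) + (n div m - K (n mod m)) * m"
      using Kw[OF nm] a1 a2 a3 by linarith
    moreover have "w (n mod m) + (n div m - K (n mod m)) * m \<in> S" using addm wS[OF nm] by blast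
    ultimately show "n \<in> S" by simp
  qed
  have K0: "K 0 = 0"
  proof -
    have "w 0 = 0" using wle[OF z] by simp
    then show ?thesis using Kw[of 0] m1 by simp
  qed
  have K1: "1 \<le> K i" if "i \<in> {1..<m}" for i
  proof (rule ccontr)
    assume "\<not> 1 \<le> K i"
    then have "K i = 0" by simp
    then have "w i = i" using Kw[of i] that by simp
    moreover have "m \<le> w i"
    proof (rule mle)
      show "w i \<in> S" using wS that by simp
      show "w i \<noteq> 0" using wS[of i] that by (intro notI) simp
    qed
    ultimately show False using that by simp
  qed
  have cl2: "\<And>u v. u \<in> sg m K \<Longrightarrow> v \<in> sg m K \<Longrightarrow> u + v \<in> sg m K"
    unfolding Seq[symmetric] by (rule cl)
  have "kunz_ok m K"
    unfolding kunz_ok_def using m1 K0 K1 closed_ineq[OF m1 cl2] by blast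
  then show ?thesis using Seq unfolding K_def by blast
qed

lemma qr_eq:
  assumes "r < (m::nat)" "r' < m"
  shows "q * m + r = q' * m + r' \<longleftrightarrow> q = q' \<and> r = r'"
proof
  assume h: "q * m + r = q' * m + r'"
  then have "(q * m + r) mod m = (q' * m + r') mod m" "(q * m + r) div m = (q' * m + r') div m" by simp_all
  then show "q = q' \<and> r = r'" using assms by simp
qed simp

lemma sum_apery_eq:
  assumes "j < m" "l < m" "i < (m::nat)"
  shows "K j * m + j + (K l * m + l) = K i * m + i \<longleftrightarrow>
     (j + l = i \<and> K j + K l = K i) \<or> (j + l = i + m \<and> K j + K l + 1 = K i)"
proof (cases "j + l < m")
  case True
  have E: "K j * m + j + (K l * m + l) = (K j + K l) * m + (j + l)" by (simp add: algebra_simps)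
  show ?thesis unfolding E qr_eq[OF True assms(3)] using True by auto
next
  case False
  have E: "K j * m + j + (K l * m + l) = (K j + K l + 1) * m + (j + l - m)" using False by (simp add: algebra_simps)
  have "j + l - m < m" using assms by linarith
  show ?thesis unfolding E qr_eq[OF \<open>j + l - m < m\<close> assms(3)] using False assms by auto
qed

lemma apery_part:
  assumes ok: "kunz_ok m K" and i: "i \<in> {1..<m}" and eq: "K i * m + i = u + v"
    and u: "u \<in> sg m K" and v: "v \<in> sg m K" and u0: "u \<noteq> 0"
  shows "u mod m \<in> {1..<m} \<and> u = K (u mod m) * m + u mod m"
proof -
  have m1: "1 \<le> m" using kunz_okD(1)[OF ok] .
  have Ki: "1 \<le> K i" using kunz_okD(3)[OF ok] i by auto
  have ud: "u div m = K (u mod m)"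
  proof (rule ccontr)
    assume "u div m \<noteq> K (u mod m)"
    then have gt: "K (u mod m) < u div m" using u by (simp add: sg_def)
    then have "m \<le> u" using m1 by (metis div_less not_less0 not_le)
    then have "(u - m) mod m = u mod m" "(u - m) div m = u div m - 1" using le_div_geq[of m u] m1 by (simp_all add: le_mod_geq)
    then have "u - m \<in> sg m K" using gt by (simp add: sg_def)
    then have "u - m + v \<in> sg m K" using sg_add[OF ok] v by blast
    moreover have "u - m + v = (K i - 1) * m + i"
      using eq \<open>m \<le> u\<close> Ki by (simp add: diff_mult_distrib)
    ultimately show False using i Ki by (simp add: sg_def)
  qed
  have "u = K (u mod m) * m + u mod m" using ud by (metis div_mult_mod_eq)
  moreover have "u mod m \<noteq> 0"
  proof
    assume "u mod m = 0"
    then have "u = 0" using ud kunz_okD(2)[OF ok] by (metis div_mult_mod_eq mult_zero_left add_0)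
    then show False using u0 by simp
  qed
  ultimately show ?thesis using m1 by simp
qed

lemma edim_sg:
  assumes ok: "kunz_ok m K"
  shows "embedding_dimension (sg m K) = 1 + card {i \<in> {1..<m}. \<not> dec m K i}"
proof -
  let ?S = "sg m K"
  let ?D = "{i \<in> {1..<m}. \<not> dec m K i}"
  have m1: "1 \<le> m" using kunz_okD(1)[OF ok] .
  have G: "(?S - {0}) - {u + v | u v. u \<in> ?S - {0} \<and> v \<in> ?S - {0}} =
        insert m ((\<lambda>i. K i * m + i) ` ?D)" (is "?G = ?R")
  proof (rule set_eqI, rule iffI)
    fix n assume n: "n \<in> ?G"
    then have nS: "n \<in> ?S" and n0: "n \<noteq> 0" and ns: "\<And>u v. u \<in> ?S - {0} \<Longrightarrow> v \<in> ?S - {0} \<Longrightarrow> n \<noteq> u + v"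
      by auto
    show "n \<in> ?R"
    proof (cases "n = m")
      case True then show ?thesis by simp
    next
      case False
      define i where "i = n mod m"
      have im: "i < m" using m1 by (simp add: i_def)
      have ge: "K i \<le> n div m" using nS by (simp add: sg_def i_def)
      have eqK: "n div m = K i"
      proof (rule ccontr)
        assume "n div m \<noteq> K i"
        then have gt: "K i < n div m" using ge by simp
        then have "m \<le> n" using m1 by (metis div_less not_less0 not_le)
        then have "(n - m) mod m = i" "(n - m) div m = n div m - 1" using le_div_geq[of m n] m1 by (simp_all add: le_mod_geq i_def)
        then have "n - m \<in> ?S" using gt by (simp add: sg_def)
        moreover have "n - m \<noteq> 0" using False \<open>m \<le> n\<close> by simp
        moreover have "m \<in> ?S - {0}" using m1 kunz_okD(2)[OF ok] by (simp add: sg_def)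
        ultimately show False using ns[of m "n - m"] \<open>m \<le> n\<close> by simp
      qed
      have nrep: "n = K i * m + i" using eqK by (metis div_mult_mod_eq i_def)
      have i0: "i \<noteq> 0"
      proof
        assume "i = 0" then show False using nrep n0 kunz_okD(2)[OF ok] by simp
      qed
      have "\<not> dec m K i"
      proof
        assume "dec m K i"
        then obtain j l where jl: "j \<in> {1..<m}" "l \<in> {1..<m}"
          "(j + l = i \<and> K j + K l = K i) \<or> (j + l = i + m \<and> K j + K l + 1 = K i)"
          unfolding dec_def by blast
        then have "K j * m + j + (K l * m + l) = n" using sum_apery_eq[of j m l i K] im nrep by auto
        moreover have "K j * m + j \<in> ?S - {0}" "K l * m + l \<in> ?S - {0}" using jl apery_elt_in by auto
        ultimately show False using ns by metis
      qed
      then show ?thesis using nrep im i0 by auto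
    qed
  next
    fix n assume n: "n \<in> ?R"
    show "n \<in> ?G"
    proof (cases "n = m")
      case True
      have "m \<in> ?S" using kunz_okD(2)[OF ok] m1 by (simp add: sg_def)
      moreover have "\<And>u v. u \<in> ?S - {0} \<Longrightarrow> v \<in> ?S - {0} \<Longrightarrow> m \<noteq> u + v"
      proof -
        fix u v assume "u \<in> ?S - {0}" "v \<in> ?S - {0}"
        then have "m \<le> u" "m \<le> v" using sg_pos_ge[OF ok] by auto
        then show "m \<noteq> u + v" using m1 by simp
      qed
      moreover have "m \<noteq> 0" using m1 by simp
      ultimately show ?thesis using True by blast
    next
      case False
      then obtain i where i: "i \<in> {1..<m}" "\<not> dec m K i" and nrep: "n = K i * m + i" using n by auto
      have "n \<in> ?S" using nrep apery_elt_in i by auto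
      moreover have "n \<noteq> 0" using nrep i by auto
      moreover have "\<And>u v. u \<in> ?S - {0} \<Longrightarrow> v \<in> ?S - {0} \<Longrightarrow> n \<noteq> u + v"
      proof
        fix u v assume u: "u \<in> ?S - {0}" and v: "v \<in> ?S - {0}" and e: "n = u + v"
        have pu: "u mod m \<in> {1..<m} \<and> u = K (u mod m) * m + u mod m"
          using apery_part[OF ok i(1), of u v] u v e nrep by auto
        have pv: "v mod m \<in> {1..<m} \<and> v = K (v mod m) * m + v mod m"
          using apery_part[OF ok i(1), of v u] u v e nrep by auto
        have "K (u mod m) * m + u mod m + (K (v mod m) * m + v mod m) = K i * m + i"
          using pu pv e nrep by simp
        then have "(u mod m + v mod m = i \<and> K (u mod m) + K (v mod m) = K i) \<or>
             (u mod m + v mod m = i + m \<and> K (u mod m) + K (v mod m) + 1 = K i)"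
          using sum_apery_eq[of "u mod m" m "v mod m" i K] pu pv i by auto
        then have "dec m K i" unfolding dec_def using pu pv by blast
        then show False using i by simp
      qed
      ultimately show ?thesis by blast
    qed
  qed
  have "m \<notin> (\<lambda>i. K i * m + i) ` ?D"
  proof
    assume "m \<in> (\<lambda>i. K i * m + i) ` ?D"
    then obtain i where "i \<in> {1..<m}" "m = K i * m + i" by auto
    then have "m mod m = (K i * m + i) mod m" by simp
    with \<open>i \<in> {1..<m}\<close> show False by simp
  qed
  moreover have "inj_on (\<lambda>i. K i * m + i) ?D"
  proof (rule inj_onI)
    fix i j assume "i \<in> ?D" "j \<in> ?D" "K i * m + i = K j * m + j"
    then have "(K i * m + i) mod m = (K j * m + j) mod m" by simp
    with \<open>i \<in> ?D\<close> \<open>j \<in> ?D\<close> show "i = j" by simp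
  qed
  ultimately have "card ?R = 1 + card ?D" by (simp add: card_image)
  then show ?thesis unfolding embedding_dimension_def G .
qed

lemma refl_sum:
  fixes f :: "nat \<Rightarrow> nat"
  assumes "\<forall>j\<in>{a..b}. c \<le> f j + f (a + b - j)"
  shows "c * card {a..b} \<le> 2 * sum f {a..b}"
proof -
  have "c * card {a..b} = (\<Sum>j\<in>{a..b}. c)" by simp
  also have "\<dots> \<le> (\<Sum>j\<in>{a..b}. f j + f (a + b - j))" using assms by (intro sum_mono) auto
  also have "\<dots> = sum f {a..b} + (\<Sum>j\<in>{a..b}. f (a + b - j))" by (simp add: sum.distrib)
  also have "(\<Sum>j\<in>{a..b}. f (a + b - j)) = sum f {a..b}"
    using sum.atLeastAtMost_rev[of f a b] by (simp add: add.commute)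
  finally show ?thesis by simp
qed

lemma PH1:
  assumes ok: "kunz_ok m K" and p: "0 < p" "p < m"
    and nd: "\<forall>j\<in>{1..p-1}. \<not> (K j = 1 \<and> K (p - j) = 1)"
  shows "p - 1 + 2 * (K p - 1) \<le> 2 * (\<Sum>i\<in>{1..<m}. K i - 1)"
proof -
  define E where "E i = K i - 1" for i
  have "\<forall>j\<in>{1..p-1}. 1 \<le> E j + E (1 + (p - 1) - j)"
  proof
    fix j assume j: "j \<in> {1..p-1}"
    have "1 \<le> K j" "1 \<le> K (p - j)" using kunz_okD(3)[OF ok] j p by auto
    moreover have e: "1 + (p - 1) - j = p - j" using p by simp
    moreover have "\<not> (K j = 1 \<and> K (p - j) = 1)" using nd j by blast
    ultimately show "1 \<le> E j + E (1 + (p - 1) - j)" unfolding E_def e by linarith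
  qed
  from refl_sum[OF this] have A: "p - 1 \<le> 2 * sum E {1..p-1}" by simp
  have "sum E {1..p} = sum E {1..p-1} + E p"
  proof -
    have "{1..p} = insert p {1..p-1}" using p by auto
    moreover have "p \<notin> {1..p-1}" using p by auto
    ultimately show ?thesis by simp
  qed
  moreover have "sum E {1..p} \<le> sum E {1..<m}" using p by (intro sum_mono2) auto
  ultimately show ?thesis using A unfolding E_def by linarith
qed

lemma PH2:
  assumes ok: "kunz_ok m K" and p: "0 < p" "p < m"
    and nd1: "\<forall>j\<in>{1..p-1}. 4 \<le> K j + K (p - j)"
    and nd2: "\<forall>j\<in>{p+1..m-1}. \<not> (K j = 1 \<and> K (m + p - j) = 1)"
  shows "2 * (p - 1) + 2 * (K p - 1) + (m - 1 - p) \<le> 2 * (\<Sum>i\<in>{1..<m}. K i - 1)"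
proof -
  define E where "E i = K i - 1" for i
  have "\<forall>j\<in>{1..p-1}. 2 \<le> E j + E (1 + (p - 1) - j)"
  proof
    fix j assume j: "j \<in> {1..p-1}"
    have e: "1 + (p - 1) - j = p - j" using p by simp
    have "4 \<le> K j + K (p - j)" using nd1 j by blast
    then show "2 \<le> E j + E (1 + (p - 1) - j)" unfolding E_def e by linarith
  qed
  from refl_sum[OF this] have A: "2 * (p - 1) \<le> 2 * sum E {1..p-1}" by simp
  have "\<forall>j\<in>{p+1..m-1}. 1 \<le> E j + E ((p + 1) + (m - 1) - j)"
  proof
    fix j assume j: "j \<in> {p+1..m-1}"
    have e: "(p + 1) + (m - 1) - j = m + p - j" using p by simp
    have "1 \<le> K j" "1 \<le> K (m + p - j)" using kunz_okD(3)[OF ok] j p by auto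
    moreover have "\<not> (K j = 1 \<and> K (m + p - j) = 1)" using nd2 j by blast
    ultimately show "1 \<le> E j + E ((p + 1) + (m - 1) - j)" unfolding e E_def by linarith
  qed
  from refl_sum[OF this] have B: "m - 1 - p \<le> 2 * sum E {p+1..m-1}" by simp
  have "{1..<m} = insert p ({1..p-1} \<union> {p+1..m-1})" using p by auto
  moreover have "p \<notin> {1..p-1} \<union> {p+1..m-1}" using p by auto
  moreover have "{1..p-1} \<inter> {p+1..m-1} = {}" by auto
  ultimately have "sum E {1..<m} = E p + (sum E {1..p-1} + sum E {p+1..m-1})"
    by (simp add: sum.union_disjoint)
  then show ?thesis using A B unfolding E_def by linarith
qed


lemma sumK:
  assumes ok: "kunz_ok m K"
  shows "(\<Sum>i<m. K i) = (\<Sum>i\<in>{1..<m}. K i - 1) + (m - 1)"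
proof -
  have m1: "1 \<le> m" using kunz_okD(1)[OF ok] .
  have "{..<m} = insert 0 {1..<m}" using m1 by auto
  then have "(\<Sum>i<m. K i) = (\<Sum>i\<in>{1..<m}. K i)" using kunz_okD(2)[OF ok] by simp
  also have "\<dots> = (\<Sum>i\<in>{1..<m}. (K i - 1) + 1)"
  proof (intro sum.cong refl)
    fix i assume "i \<in> {1..<m}"
    then have "1 \<le> K i" using kunz_okD(3)[OF ok] by auto
    then show "K i = K i - 1 + 1" by simp
  qed
  also have "\<dots> = (\<Sum>i\<in>{1..<m}. K i - 1) + (\<Sum>i\<in>{1..<m}. 1)" by (rule sum.distrib)
  also have "(\<Sum>i\<in>{1..<m}. (1::nat)) = m - 1" by simp
  finally show ?thesis .
qed

lemma sum_x:
  fixes x :: "nat \<Rightarrow> nat"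
  assumes "\<forall>i\<in>{1..t}. x i \<in> {1, 2, 3}"
  shows "(\<Sum>i\<in>{1..t}. x i - 1) = cnt_a t x + 2 * cnt_b t x"
proof -
  have "(\<Sum>i\<in>{1..t}. x i - 1) = (\<Sum>i\<in>{1..t}. (if x i = 2 then 1 else 0) + 2 * (if x i = 3 then 1 else 0))"
  proof (intro sum.cong refl)
    fix i assume "i \<in> {1..t}"
    then have "x i \<in> {1, 2, 3}" using assms by blast
    then show "x i - 1 = (if x i = 2 then 1 else 0) + 2 * (if x i = 3 then 1 else 0)" by auto
  qed
  also have "\<dots> = (\<Sum>i\<in>{1..t}. (if x i = 2 then 1 else 0)) + 2 * (\<Sum>i\<in>{1..t}. (if x i = 3 then 1 else 0))"
    by (simp add: sum.distrib sum_distrib_left)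
  also have "(\<Sum>i\<in>{1..t}. (if x i = 2 then 1 else 0)) = cnt_a t x"
    unfolding cnt_a_def by (simp add: sum.If_cases Int_def conj_commute)
  also have "(\<Sum>i\<in>{1..t}. (if x i = 3 then 1 else 0)) = cnt_b t x"
    unfolding cnt_b_def by (simp add: sum.If_cases Int_def conj_commute)
  finally show ?thesis .
qed

context
  fixes K1 g t m :: nat and x :: "nat \<Rightarrow> nat"
  assumes tdef: "t = 2 * K1 - 1" and mdef: "m = g + 1 - K1" and gK: "4 * K1 \<le> g + 1"
    and xv: "\<forall>i\<in>{1..t}. x i \<in> {1, 2, 3}"
    and c1: "\<forall>i1\<in>{1..t}. \<forall>i2\<in>{1..t}. \<forall>i3\<in>{1..t}. i1 + i2 = i3 \<longrightarrow> \<not> (x i1 = 1 \<and> x i2 = 1 \<and> x i3 = 3)"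
    and ab: "cnt_a t x + 2 * cnt_b t x \<le> K1"
begin

definition KA :: "nat set \<Rightarrow> nat \<Rightarrow> nat" where
  "KA A i = (if i = 0 then 0 else if i \<le> t then x i else if i \<in> A then 2 else 1)"

lemma tm: "t < m" "1 \<le> m" "3 * K1 \<le> m" "2 * K1 \<le> t + 1" "m - 1 + K1 = g"
  using tdef mdef gK by auto

lemma KA_pos: "0 < i \<Longrightarrow> 1 \<le> KA A i"
proof -
  assume "0 < i"
  show ?thesis
  proof (cases "i \<le> t")
    case True
    then have "x i \<in> {1,2,3}" using xv \<open>0 < i\<close> by auto
    then show ?thesis using True \<open>0 < i\<close> by (auto simp: KA_def)
  qed (auto simp: KA_def)
qed

lemma KA_le3: "KA A i \<le> 3"
proof (cases "0 < i \<and> i \<le> t")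
  case True
  then have "x i \<in> {1,2,3}" using xv by auto
  then show ?thesis using True by (auto simp: KA_def)
qed (auto simp: KA_def)

lemma KA_ok: assumes A: "A \<subseteq> {t+1..<m}" shows "kunz_ok m (KA A)"
  unfolding kunz_ok_def
proof (intro conjI ballI allI impI)
  show "1 \<le> m" using tm by simp
  show "KA A 0 = 0" by (simp add: KA_def)
  fix i assume "i \<in> {1..<m}" then show "1 \<le> KA A i" using KA_pos by simp
next
  fix i j assume ij: "i < m" "j < m"
  let ?R = "KA A i + KA A j + (if m \<le> i + j then 1 else 0)"
  show "KA A ((i + j) mod m) \<le> ?R"
  proof (cases "i = 0 \<or> j = 0")
    case True then show ?thesis using ij by auto
  next
    case False
    then have p: "1 \<le> KA A i" "1 \<le> KA A j" using KA_pos by auto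
    show ?thesis
    proof (cases "m \<le> i + j")
      case True then show ?thesis using p KA_le3[of A "(i + j) mod m"] by simp
    next
      case nw: False
      then have s: "(i + j) mod m = i + j" by simp
      show ?thesis
      proof (cases "KA A (i + j) \<le> 2")
        case True then show ?thesis using s p nw by simp
      next
        case big: False
        then have "KA A (i + j) = 3" using KA_le3[of A "i + j"] by simp
        then have st: "i + j \<le> t" "x (i + j) = 3" using False unfolding KA_def by (auto split: if_splits)
        then have "i \<le> t" "j \<le> t" "1 \<le> i" "1 \<le> j" using False by auto
        then have "KA A i = x i" "KA A j = x j" by (auto simp: KA_def)
        moreover have "\<not> (x i = 1 \<and> x j = 1)" using c1 st \<open>1 \<le> i\<close> \<open>1 \<le> j\<close> \<open>i \<le> t\<close> \<open>j \<le> t\<close> by auto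
        ultimately show ?thesis using s p \<open>KA A (i + j) = 3\<close> nw by auto
      qed
    qed
  qed
qed

lemma KA_sumE: assumes A: "A \<subseteq> {t+1..<m}"
  shows "(\<Sum>i\<in>{1..<m}. KA A i - 1) = cnt_a t x + 2 * cnt_b t x + card A"
proof -
  have "{1..<m} = {1..t} \<union> {t+1..<m}" using tm by auto
  moreover have "{1..t} \<inter> {t+1..<m} = {}" by auto
  ultimately have "(\<Sum>i\<in>{1..<m}. KA A i - 1) = (\<Sum>i\<in>{1..t}. KA A i - 1) + (\<Sum>i\<in>{t+1..<m}. KA A i - 1)"
    by (simp add: sum.union_disjoint[symmetric])
  also have "(\<Sum>i\<in>{1..t}. KA A i - 1) = (\<Sum>i\<in>{1..t}. x i - 1)"
    by (intro sum.cong refl) (simp add: KA_def)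
  also have "\<dots> = cnt_a t x + 2 * cnt_b t x" using sum_x[OF xv] .
  also have "(\<Sum>i\<in>{t+1..<m}. KA A i - 1) = (\<Sum>i\<in>{t+1..<m}. if i \<in> A then 1 else 0)"
    by (intro sum.cong refl) (simp add: KA_def)
  also have "\<dots> = card {i \<in> {t+1..<m}. i \<in> A}" by (simp add: sum.inter_filter[symmetric])
  also have "{i \<in> {t+1..<m}. i \<in> A} = A" using A by auto
  finally show ?thesis .
qed


lemma KA_sumE_K1: assumes A: "A \<subseteq> {t+1..<m}" and cA: "card A = K1 - cnt_a t x - 2 * cnt_b t x"
  shows "(\<Sum>i\<in>{1..<m}. KA A i - 1) = K1"
  using KA_sumE[OF A] cA ab by simp

lemma dec_one: assumes "KA A i = 1" shows "\<not> dec m (KA A) i"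
proof
  assume "dec m (KA A) i"
  then obtain j l where "j \<in> {1..<m}" "l \<in> {1..<m}"
    "(j + l = i \<and> KA A j + KA A l = KA A i) \<or> (j + l = i + m \<and> KA A j + KA A l + 1 = KA A i)"
    unfolding dec_def by blast
  moreover have "1 \<le> KA A j" "1 \<le> KA A l" using KA_pos calculation by auto
  ultimately show False using assms by auto
qed

lemma dec_A: assumes A: "A \<subseteq> {t+1..<m}" and cA: "card A = K1 - cnt_a t x - 2 * cnt_b t x"
  and pA: "p \<in> A" shows "dec m (KA A) p"
proof (rule ccontr)
  assume nd: "\<not> dec m (KA A) p"
  have p: "t < p" "p < m" using A pA by auto
  have Kp: "KA A p = 2" using p pA by (simp add: KA_def)
  have "\<forall>j\<in>{1..p-1}. \<not> (KA A j = 1 \<and> KA A (p - j) = 1)"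
  proof (intro ballI notI)
    fix j assume j: "j \<in> {1..p-1}" and h: "KA A j = 1 \<and> KA A (p - j) = 1"
    have "j \<in> {1..<m}" "p - j \<in> {1..<m}" "j + (p - j) = p" using j p by auto
    then have "dec m (KA A) p" unfolding dec_def using h Kp by (intro bexI[of _ j] bexI[of _ "p - j"]) auto
    with nd show False by simp
  qed
  from PH1[OF KA_ok[OF A] _ p(2) this] p have "p - 1 + 2 * (KA A p - 1) \<le> 2 * K1"
    using KA_sumE_K1[OF A cA] by simp
  then show False using Kp p tm by simp
qed

definition Cs :: "nat set" where
  "Cs = {i \<in> {1..t}. \<exists>j1\<in>{1..t}. \<exists>j2\<in>{1..t}. j1 + j2 = i \<and> x j1 = 1 \<and> x j2 = 1 \<and> x i = 2}"

lemma dec_2: assumes A: "A \<subseteq> {t+1..<m}" and i: "i \<in> {1..t}" "x i = 2"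
  shows "dec m (KA A) i \<longleftrightarrow> i \<in> Cs"
proof
  assume "dec m (KA A) i"
  then obtain j l where jl: "j \<in> {1..<m}" "l \<in> {1..<m}"
    "(j + l = i \<and> KA A j + KA A l = KA A i) \<or> (j + l = i + m \<and> KA A j + KA A l + 1 = KA A i)"
    unfolding dec_def by blast
  have Ki: "KA A i = 2" using i by (simp add: KA_def)
  have p: "1 \<le> KA A j" "1 \<le> KA A l" using KA_pos jl by auto
  then have "j + l = i" "KA A j = 1" "KA A l = 1" using jl(3) Ki by auto
  then have "j \<le> t" "l \<le> t" "x j = 1" "x l = 1" using i jl by (auto simp: KA_def)
  then have "j \<in> {1..t}" "l \<in> {1..t}" using jl by auto
  then show "i \<in> Cs" unfolding Cs_def using i \<open>j + l = i\<close> \<open>x j = 1\<close> \<open>x l = 1\<close> by blast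
next
  assume "i \<in> Cs"
  then obtain j1 j2 where j: "j1 \<in> {1..t}" "j2 \<in> {1..t}" "j1 + j2 = i" "x j1 = 1" "x j2 = 1"
    unfolding Cs_def by blast
  have "KA A j1 = 1" "KA A j2 = 1" "KA A i = 2" using j i by (auto simp: KA_def)
  moreover have "j1 \<in> {1..<m}" "j2 \<in> {1..<m}" using j tm by auto
  ultimately show "dec m (KA A) i" unfolding dec_def using j by (intro bexI[of _ j1] bexI[of _ j2]) auto
qed

lemma dec_3: assumes A: "A \<subseteq> {t+1..<m}" and cA: "card A = K1 - cnt_a t x - 2 * cnt_b t x"
  and i: "i \<in> {1..t}" "x i = 3" shows "dec m (KA A) i"
proof (rule ccontr)
  assume nd: "\<not> dec m (KA A) i"
  have ok: "kunz_ok m (KA A)" using KA_ok[OF A] .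
  have im: "0 < i" "i < m" using i tm by auto
  have Ki: "KA A i = 3" using i by (simp add: KA_def)
  have nd1: "\<forall>j\<in>{1..i-1}. 4 \<le> KA A j + KA A (i - j)"
  proof
    fix j assume j: "j \<in> {1..i-1}"
    have jm: "j < m" "i - j < m" "j + (i - j) = i" using j im by auto
    have "KA A ((j + (i - j)) mod m) \<le> KA A j + KA A (i - j) + (if m \<le> j + (i - j) then 1 else 0)"
      using kunz_okD(4)[OF ok jm(1,2)] .
    then have ge: "3 \<le> KA A j + KA A (i - j)" using jm im Ki by simp
    have "KA A j + KA A (i - j) \<noteq> 3"
    proof
      assume "KA A j + KA A (i - j) = 3"
      moreover have "j \<in> {1..<m}" "i - j \<in> {1..<m}" using j im by auto
      ultimately have "dec m (KA A) i" unfolding dec_def using Ki jm(3) by (intro bexI[of _ j] bexI[of _ "i - j"]) auto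
      with nd show False by simp
    qed
    with ge show "4 \<le> KA A j + KA A (i - j)" by simp
  qed
  have nd2: "\<forall>j\<in>{i+1..m-1}. \<not> (KA A j = 1 \<and> KA A (m + i - j) = 1)"
  proof (intro ballI notI)
    fix j assume j: "j \<in> {i+1..m-1}" and h: "KA A j = 1 \<and> KA A (m + i - j) = 1"
    have "j \<in> {1..<m}" "m + i - j \<in> {1..<m}" "j + (m + i - j) = i + m" using j im by auto
    then have "dec m (KA A) i" unfolding dec_def using h Ki by (intro bexI[of _ j] bexI[of _ "m + i - j"]) auto
    with nd show False by simp
  qed
  from PH2[OF ok im nd1 nd2] have "2 * (i - 1) + 2 * (KA A i - 1) + (m - 1 - i) \<le> 2 * K1"
    using KA_sumE_K1[OF A cA] by simp
  then show False using Ki im tm by simp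
qed

lemma dec_set: assumes A: "A \<subseteq> {t+1..<m}" and cA: "card A = K1 - cnt_a t x - 2 * cnt_b t x"
  shows "{i \<in> {1..<m}. dec m (KA A) i} = A \<union> {i \<in> {1..t}. x i = 3} \<union> Cs"
proof (rule set_eqI)
  fix i
  show "i \<in> {i \<in> {1..<m}. dec m (KA A) i} \<longleftrightarrow> i \<in> A \<union> {i \<in> {1..t}. x i = 3} \<union> Cs"
  proof (cases "i \<in> {1..t}")
    case True
    then have iA: "i \<notin> A" using A by auto
    have im: "i \<in> {1..<m}" using True tm by auto
    have "x i \<in> {1,2,3}" using xv True by auto
    then consider "x i = 1" | "x i = 2" | "x i = 3" by auto
    then show ?thesis
    proof cases
      case 1
      then have "KA A i = 1" using True by (simp add: KA_def)
      then have "\<not> dec m (KA A) i" by (rule dec_one)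
      moreover have "i \<notin> Cs" using 1 by (simp add: Cs_def)
      ultimately show ?thesis using iA 1 by auto
    next
      case 2
      then show ?thesis using dec_2[OF A True 2] iA im by auto
    next
      case 3
      then have "i \<notin> Cs" by (simp add: Cs_def)
      then show ?thesis using dec_3[OF A cA True 3] im True 3 by auto
    qed
  next
    case False
    then have nC: "i \<notin> Cs" by (auto simp: Cs_def)
    show ?thesis
    proof (cases "i \<in> A")
      case True
      then show ?thesis using dec_A[OF A cA True] A by auto
    next
      case nA: False
      show ?thesis
      proof (cases "i \<in> {1..<m}")
        case True
        then have "KA A i = 1" using False nA by (auto simp: KA_def)
        then show ?thesis using dec_one nA nC False by auto
      qed (use nA nC False in auto)
    qed
  qed
qed

lemma edim_KA: assumes A: "A \<subseteq> {t+1..<m}" and cA: "card A = K1 - cnt_a t x - 2 * cnt_b t x"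
  shows "embedding_dimension (sg m (KA A)) + card A + cnt_b t x + cnt_c t x = m"
proof -
  let ?D = "{i \<in> {1..<m}. dec m (KA A) i}"
  let ?B = "{i \<in> {1..t}. x i = 3}"
  have e: "embedding_dimension (sg m (KA A)) = 1 + card {i \<in> {1..<m}. \<not> dec m (KA A) i}"
    using edim_sg[OF KA_ok[OF A]] .
  have sub: "?D \<subseteq> {1..<m}" by auto
  have "{i \<in> {1..<m}. \<not> dec m (KA A) i} = {1..<m} - ?D" by auto
  then have c1: "card {i \<in> {1..<m}. \<not> dec m (KA A) i} = card {1..<m} - card ?D"
    using card_Diff_subset[OF finite_subset[OF sub] sub] by simp
  have "card ?D \<le> m - 1" using card_mono[OF _ sub] by simp
  have fin: "finite A" "finite ?B" "finite Cs" using A by (auto simp: Cs_def intro: finite_subset)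
  have d1: "A \<inter> (?B \<union> Cs) = {}" using A by (auto simp: Cs_def)
  have d2: "?B \<inter> Cs = {}" by (auto simp: Cs_def)
  have "card ?D = card A + card ?B + card Cs"
    unfolding dec_set[OF A cA] Un_assoc using fin d1 d2 by (simp add: card_Un_disjoint)
  moreover have "card ?B = cnt_b t x" by (simp add: cnt_b_def)
  moreover have "card Cs = cnt_c t x" by (simp add: cnt_c_def Cs_def)
  ultimately show ?thesis using e c1 \<open>card ?D \<le> m - 1\<close> tm by simp
qed


lemma set_eq:
  "{S. numerical_semigroup S \<and> genus S = g \<and> multiplicity S = m \<and> (\<forall>i\<in>{1..t}. kunz S i = x i)}
   = (\<lambda>A. sg m (KA A)) ` {A. A \<subseteq> {t+1..<m} \<and> card A = K1 - cnt_a t x - 2 * cnt_b t x}"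
  (is "?L = ?R")
proof
  show "?R \<subseteq> ?L"
  proof
    fix S assume "S \<in> ?R"
    then obtain A where A: "A \<subseteq> {t+1..<m}" and cA: "card A = K1 - cnt_a t x - 2 * cnt_b t x"
      and S: "S = sg m (KA A)" by blast
    have ok: "kunz_ok m (KA A)" using KA_ok[OF A] .
    have "genus S = g"
      using S genus_sg(1)[OF tm(2)] sumK[OF ok] KA_sumE_K1[OF A cA] tm by simp
    moreover have "\<forall>i\<in>{1..t}. kunz S i = x i"
    proof
      fix i assume i: "i \<in> {1..t}"
      then have "i < m" using tm by auto
      then show "kunz S i = x i" using S kunz_sg[OF ok] i by (simp add: KA_def)
    qed
    ultimately show "S \<in> ?L" using S ns_sg[OF ok] mult_sg[OF ok] by simp
  qed
next
  show "?L \<subseteq> ?R"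
  proof
    fix S assume "S \<in> ?L"
    then have ns: "numerical_semigroup S" and gS: "genus S = g" and mS: "multiplicity S = m"
      and kx: "\<forall>i\<in>{1..t}. kunz S i = x i" by auto
    define K where "K = kunz S"
    have ok: "kunz_ok m K" and Seq: "S = sg m K" using ns_structure[OF ns mS[symmetric]] K_def by auto
    have sE: "(\<Sum>i\<in>{1..<m}. K i - 1) = K1"
      using gS Seq genus_sg(1)[OF tm(2)] sumK[OF ok] tm by simp
    have le2: "K p \<le> 2" if p: "p \<in> {t+1..<m}" for p
    proof (rule ccontr)
      assume "\<not> K p \<le> 2"
      then have K3: "3 \<le> K p" by simp
      have "\<forall>j\<in>{1..p-1}. \<not> (K j = 1 \<and> K (p - j) = 1)"
      proof (intro ballI notI)
        fix j assume j: "j \<in> {1..p-1}" and h: "K j = 1 \<and> K (p - j) = 1"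
        have jm: "j < m" "p - j < m" "j + (p - j) = p" "p < m" using j p by auto
        have "K ((j + (p - j)) mod m) \<le> K j + K (p - j) + (if m \<le> j + (p - j) then 1 else 0)"
          using kunz_okD(4)[OF ok jm(1,2)] .
        then show False using jm h K3 by simp
      qed
      from PH1[OF ok _ _ this] p have "p - 1 + 2 * (K p - 1) \<le> 2 * K1" using sE by simp
      moreover have "t + 1 \<le> p" using p by simp
      ultimately show False using K3 tm by linarith
    qed
    define A where "A = {p \<in> {t+1..<m}. K p = 2}"
    have A: "A \<subseteq> {t+1..<m}" by (auto simp: A_def)
    have KK: "K i = KA A i" if i: "i < m" for i
    proof -
      consider "i = 0" | "i \<in> {1..t}" | "i \<in> {t+1..<m}" using i by force
      then show ?thesis
      proof cases
        case 1 then show ?thesis using kunz_okD(2)[OF ok] by (simp add: KA_def)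
      next
        case 2 then show ?thesis using kx K_def by (simp add: KA_def)
      next
        case 3
        then have "1 \<le> K i" "K i \<le> 2" using kunz_okD(3)[OF ok] le2 by auto
        then show ?thesis using 3 by (auto simp: KA_def A_def)
      qed
    qed
    have S2: "S = sg m (KA A)" using Seq sg_cong[OF KK tm(2)] by simp
    have "(\<Sum>i\<in>{1..<m}. KA A i - 1) = K1" using sE KK by simp
    then have "card A = K1 - cnt_a t x - 2 * cnt_b t x" using KA_sumE[OF A] by simp
    then show "S \<in> ?R" using S2 A by blast
  qed
qed

lemma inj_KA: "inj_on (\<lambda>A. sg m (KA A)) {A. A \<subseteq> {t+1..<m} \<and> card A = K1 - cnt_a t x - 2 * cnt_b t x}"
proof (rule inj_onI)
  fix A B assume A: "A \<in> {A. A \<subseteq> {t+1..<m} \<and> card A = K1 - cnt_a t x - 2 * cnt_b t x}"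
    and B: "B \<in> {A. A \<subseteq> {t+1..<m} \<and> card A = K1 - cnt_a t x - 2 * cnt_b t x}"
    and eq: "sg m (KA A) = sg m (KA B)"
  have okA: "kunz_ok m (KA A)" and okB: "kunz_ok m (KA B)" using KA_ok A B by auto
  have "i \<in> A \<longleftrightarrow> i \<in> B" if i: "i \<in> {t+1..<m}" for i
  proof -
    have "KA A i = KA B i" using kunz_sg[OF okA, of i] kunz_sg[OF okB, of i] eq i by simp
    then show ?thesis using i by (auto simp: KA_def split: if_splits)
  qed
  then show "A = B" using A B by blast
qed

lemma card_main:
  "card {S. numerical_semigroup S \<and> genus S = g \<and> multiplicity S = m \<and> (\<forall>i\<in>{1..t}. kunz S i = x i)}
   = (m - 1 - t) choose (K1 - cnt_a t x - 2 * cnt_b t x)"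
  unfolding set_eq card_image[OF inj_KA] by (simp add: n_subsets)

lemma edim_main:
  assumes "numerical_semigroup S" "genus S = g" "multiplicity S = m" "\<forall>i\<in>{1..t}. kunz S i = x i"
  shows "embedding_dimension S + (K1 - cnt_a t x - 2 * cnt_b t x) + cnt_b t x + cnt_c t x = m"
proof -
  have "S \<in> (\<lambda>A. sg m (KA A)) ` {A. A \<subseteq> {t+1..<m} \<and> card A = K1 - cnt_a t x - 2 * cnt_b t x}"
    using set_eq assms by blast
  then obtain A where A: "A \<subseteq> {t+1..<m}" and cA: "card A = K1 - cnt_a t x - 2 * cnt_b t x"
      and S: "S = sg m (KA A)" by blast
  show ?thesis using edim_KA[OF A cA] S cA by simp
qed

end


theorem proposition8p7:
  fixes k1 k2 :: int and g :: nat and x :: "nat \<Rightarrow> nat"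
  defines "t \<equiv> nat (2 * k1 + 1)"
  assumes "-1 \<le> k1" and "k1 \<le> k2" and "int g \<ge> 4 * k1 + 3"
    and "\<forall>i\<in>{1..t}. x i \<in> {1, 2, 3}"
    and "\<forall>i1\<in>{1..t}. \<forall>i2\<in>{1..t}. \<forall>i3\<in>{1..t}.
           i1 + i2 = i3 \<longrightarrow> \<not> (x i1 = 1 \<and> x i2 = 1 \<and> x i3 = 3)"
    and "int (cnt_a t x) + int (cnt_b t x) - int (cnt_c t x) = 2 * k1 + 1 - k2"
    and "int (cnt_a t x) + 2 * int (cnt_b t x) \<le> k1 + 1"
  shows "card {S. numerical_semigroup S \<and> genus S = g
                 \<and> int (multiplicity S) = int g - k1
                 \<and> int (embedding_dimension S) = int g - k2
                 \<and> (\<forall>i\<in>{1..t}. kunz S i = x i)}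
         = nat (int g - 3 * k1 - 2) choose nat (k1 + 1 - int (cnt_a t x) - 2 * int (cnt_b t x))"
proof -
  define K1 where "K1 = nat (k1 + 1)"
  have k1e: "k1 = int K1 - 1" using assms(2) K1_def by simp
  have tdef: "t = 2 * K1 - 1" unfolding t_def k1e by (cases K1) auto
  define m where "m = g + 1 - K1"
  have gK: "4 * K1 \<le> g + 1" using assms(4) k1e by simp
  have ab: "cnt_a t x + 2 * cnt_b t x \<le> K1" using assms(8) k1e by simp
  note ctx = tdef m_def gK assms(5) assms(6) ab
  have im: "int m = int g - k1" using m_def k1e gK by simp
  let ?r = "K1 - cnt_a t x - 2 * cnt_b t x"
  have "{S. numerical_semigroup S \<and> genus S = g
                 \<and> int (multiplicity S) = int g - k1
                 \<and> int (embedding_dimension S) = int g - k2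
                 \<and> (\<forall>i\<in>{1..t}. kunz S i = x i)}
      = {S. numerical_semigroup S \<and> genus S = g \<and> multiplicity S = m \<and> (\<forall>i\<in>{1..t}. kunz S i = x i)}"
  proof (rule Collect_cong, rule iffI)
    fix S assume "numerical_semigroup S \<and> genus S = g \<and> int (multiplicity S) = int g - k1
                 \<and> int (embedding_dimension S) = int g - k2 \<and> (\<forall>i\<in>{1..t}. kunz S i = x i)"
    then show "numerical_semigroup S \<and> genus S = g \<and> multiplicity S = m \<and> (\<forall>i\<in>{1..t}. kunz S i = x i)"
      using im by simp
  next
    fix S assume h: "numerical_semigroup S \<and> genus S = g \<and> multiplicity S = m \<and> (\<forall>i\<in>{1..t}. kunz S i = x i)"
    then have "embedding_dimension S + ?r + cnt_b t x + cnt_c t x = m"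
      using edim_main[OF ctx] by blast
    then have "int (embedding_dimension S) = int g - k2"
      using assms(7) ab k1e m_def gK by linarith
    then show "numerical_semigroup S \<and> genus S = g \<and> int (multiplicity S) = int g - k1
                 \<and> int (embedding_dimension S) = int g - k2 \<and> (\<forall>i\<in>{1..t}. kunz S i = x i)"
      using h im by simp
  qed
  also have "card \<dots> = (m - 1 - t) choose ?r" by (rule card_main[OF ctx])
  also have "\<dots> = nat (int g - 3 * k1 - 2) choose nat (k1 + 1 - int (cnt_a t x) - 2 * int (cnt_b t x))"
  proof (cases "K1 = 0")
    case True
    then have "?r = 0" "nat (k1 + 1 - int (cnt_a t x) - 2 * int (cnt_b t x)) = 0" using ab k1e by auto
    then show ?thesis by simp
  next
    case False
    have "m - 1 - t = nat (int g - 3 * k1 - 2)" using False tdef m_def gK k1e by simp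
    moreover have "?r = nat (k1 + 1 - int (cnt_a t x) - 2 * int (cnt_b t x))" using ab k1e by simp
    ultimately show ?thesis by simp
  qed
  finally show ?thesis .
qed

end
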